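(* Let $X$ be a smooth manifold and let $a,x_1,x_2,x_3\in H^2(X;\mathbb{R})$ satisfy $a\cup x_i=0$ for $i=1,2,3$. Then the triple Massey products $\langle x_1,a,x_2\rangle$, $\langle x_1,a,x_3\rangle$, $\langle x_2,a,x_3\rangle$ are defined, and for any two elements $b_1,b_2$ of the G-Massey product $\langle a;x_1,x_2,x_3\rangle$ one has $$b_1-b_2\in W:=\langle x_1,a,x_2\rangle\cup H^3(X)+\langle x_1,a,x_3\rangle\cup H^3(X)+\langle x_2,a,x_3\rangle\cup H^3(X)\subset H^8(X).$$
   Context: All cohomology is real de Rham cohomology. For classes $a_i\in H^{p_i}(X)$ with $a_1\cup a_2=0$, $a_2\cup a_3=0$, the triple Massey product is the subset $\langle a_1,a_2,a_3\rangle=\{[\alpha_1\wedge\eta+(-1)^{p_1+1}\xi\wedge\alpha_3] : a_i=[\alpha_i],\ \alpha_1\wedge\alpha_2=d\xi,\ \alpha_2\wedge\alpha_3=d\eta\}\subset H^{p_1+p_2+p_3-1}(X)$. For a subset $S\subset H^k(X)$ and $c\in H^l(X)$ (or a subspace), $S\cup H^3(X)$ denotes the span of products. G-Massey product: for $a,x_1,x_2,x_3\in H^2(X)$ with $a\cup x_i=0$ ($i=1,2,3$), $\langle a;x_1,x_2,x_3\rangle$ is the set of classes $[\xi_1\wedge\xi_2\wedge\beta_3+\xi_2\wedge\xi_3\wedge\beta_1+\xi_3\wedge\xi_1\wedge\beta_2]\in H^8(X)$, over all closed 2-forms $\alpha,\beta_i$ with $a=[\alpha]$, $x_i=[\beta_i]$,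 and all 3-forms $\xi_i$ with $\alpha\wedge\beta_i=d\xi_i$ (these forms are closed). It is called trivial if $0\in\langle a;x_1,x_2,x_3\rangle$. *)

theory Defs
  imports "HOL-Analysis.Analysis"
begin

text \<open>
  Abstract model of the real de Rham algebra of a manifold: a graded-commutative
  differential graded algebra over the reals.  The total space of forms is a
  real vector space of type 'a; hom k is the subspace of homogeneous k-forms,
  mul is the wedge product and d the exterior derivative.
\<close>

definition cdga :: "(nat \<Rightarrow> 'a::real_vector set) \<Rightarrow> ('a \<Rightarrow> 'a \<Rightarrow> 'a) \<Rightarrow> ('a \<Rightarrow> 'a) \<Rightarrow> bool" where
  "cdga hom mul d \<longleftrightarrow>
     (\<forall>k. subspace (hom k)) \<and>
     bilinear mul \<and> linear d \<and>
     (\<forall>x y z. mul (mul x y) z = mul x (mul y z)) \<and>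
     (\<forall>p q x y. x \<in> hom p \<longrightarrow> y \<in> hom q \<longrightarrow> mul x y \<in> hom (p + q)) \<and>
     (\<forall>p q x y. x \<in> hom p \<longrightarrow> y \<in> hom q \<longrightarrow> mul x y = ((-1) ^ (p * q)) *\<^sub>R mul y x) \<and>
     (\<forall>k x. x \<in> hom k \<longrightarrow> d x \<in> hom (Suc k)) \<and>
     (\<forall>x. d (d x) = 0) \<and>
     (\<forall>p x y. x \<in> hom p \<longrightarrow> d (mul x y) = mul (d x) y + ((-1) ^ p) *\<^sub>R mul x (d y))"

definition closed_form :: "(nat \<Rightarrow> 'a::real_vector set) \<Rightarrow> ('a \<Rightarrow> 'a) \<Rightarrow> nat \<Rightarrow> 'a \<Rightarrow> bool" where
  "closed_form hom d k x \<longleftrightarrow> x \<in> hom k \<and> d x = 0"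

definition exact_form :: "(nat \<Rightarrow> 'a::real_vector set) \<Rightarrow> ('a \<Rightarrow> 'a) \<Rightarrow> nat \<Rightarrow> 'a \<Rightarrow> bool" where
  "exact_form hom d k x \<longleftrightarrow> x \<in> hom k \<and> (x = 0 \<or> (0 < k \<and> (\<exists>y \<in> hom (k - 1). x = d y)))"

definition hclass :: "(nat \<Rightarrow> 'a::real_vector set) \<Rightarrow> ('a \<Rightarrow> 'a) \<Rightarrow> nat \<Rightarrow> 'a \<Rightarrow> 'a set" where
  "hclass hom d k x = {y. closed_form hom d k y \<and> exact_form hom d k (x - y)}"

definition hcoh :: "(nat \<Rightarrow> 'a::real_vector set) \<Rightarrow> ('a \<Rightarrow> 'a) \<Rightarrow> nat \<Rightarrow> 'a set set" where
  "hcoh hom d k = hclass hom d k ` {x. closed_form hom d k x}"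

definition hcup :: "(nat \<Rightarrow> 'a::real_vector set) \<Rightarrow> ('a \<Rightarrow> 'a \<Rightarrow> 'a) \<Rightarrow> ('a \<Rightarrow> 'a) \<Rightarrow> nat \<Rightarrow> nat \<Rightarrow> 'a set \<Rightarrow> 'a set \<Rightarrow> 'a set" where
  "hcup hom mul d p q a b = hclass hom d (p + q) (mul (SOME x. x \<in> a) (SOME y. y \<in> b))"

definition hminus :: "'a::real_vector set \<Rightarrow> 'a set \<Rightarrow> 'a set" where
  "hminus a b = {x - y | x y. x \<in> a \<and> y \<in> b}"

definition massey :: "(nat \<Rightarrow> 'a::real_vector set) \<Rightarrow> ('a \<Rightarrow> 'a \<Rightarrow> 'a) \<Rightarrow> ('a \<Rightarrow> 'a) \<Rightarrow>
    nat \<Rightarrow> nat \<Rightarrow> nat \<Rightarrow> 'a set \<Rightarrow> 'a set \<Rightarrow> 'a set \<Rightarrow> 'a set set" where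
  "massey hom mul d p1 p2 p3 a1 a2 a3 =
     {hclass hom d (p1 + p2 + p3 - 1) (mul al1 eta + ((-1) ^ (p1 + 1)) *\<^sub>R mul xi al3) | al1 al2 al3 xi eta.
        al1 \<in> a1 \<and> al2 \<in> a2 \<and> al3 \<in> a3 \<and>
        xi \<in> hom (p1 + p2 - 1) \<and> eta \<in> hom (p2 + p3 - 1) \<and>
        mul al1 al2 = d xi \<and> mul al2 al3 = d eta}"

definition gmassey :: "(nat \<Rightarrow> 'a::real_vector set) \<Rightarrow> ('a \<Rightarrow> 'a \<Rightarrow> 'a) \<Rightarrow> ('a \<Rightarrow> 'a) \<Rightarrow>
    'a set \<Rightarrow> 'a set \<Rightarrow> 'a set \<Rightarrow> 'a set \<Rightarrow> 'a set set" where
  "gmassey hom mul d a x1 x2 x3 =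
     {hclass hom d 8 (mul (mul xi1 xi2) be3 + mul (mul xi2 xi3) be1 + mul (mul xi3 xi1) be2)
        | al be1 be2 be3 xi1 xi2 xi3.
        al \<in> a \<and> be1 \<in> x1 \<and> be2 \<in> x2 \<and> be3 \<in> x3 \<and>
        xi1 \<in> hom 3 \<and> xi2 \<in> hom 3 \<and> xi3 \<in> hom 3 \<and>
        mul al be1 = d xi1 \<and> mul al be2 = d xi2 \<and> mul al be3 = d xi3}"

text \<open>Real scalars are absorbed into the closed l-forms.\<close>
definition cup_span :: "(nat \<Rightarrow> 'a::real_vector set) \<Rightarrow> ('a \<Rightarrow> 'a \<Rightarrow> 'a) \<Rightarrow> ('a \<Rightarrow> 'a) \<Rightarrow>
    nat \<Rightarrow> nat \<Rightarrow> 'a set set \<Rightarrow> 'a set set" where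
  "cup_span hom mul d k l S =
     {hclass hom d (k + l) (\<Sum>j<n. mul (m j) (h j)) | (n::nat) m h.
        \<forall>j<n. (\<exists>s\<in>S. m j \<in> s) \<and> closed_form hom d l (h j)}"

end

theory Submission
  imports Defs
begin

definition gg :: "('a::real_vector \<Rightarrow> 'a \<Rightarrow> 'a) \<Rightarrow> 'a \<Rightarrow> 'a \<Rightarrow> 'a \<Rightarrow> 'a \<Rightarrow> 'a \<Rightarrow> 'a \<Rightarrow> 'a" where
  "gg mul b1 b2 b3 x1 x2 x3 = mul (mul x1 x2) b3 + mul (mul x2 x3) b1 + mul (mul x3 x1) b2"

lemma gg_rot: "gg mul b1 b2 b3 x1 x2 x3 = gg mul b2 b3 b1 x2 x3 x1"
  unfolding gg_def by (simp add: algebra_simps)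

lemma gg_rot2: "gg mul b1 b2 b3 x1 x2 x3 = gg mul b3 b1 b2 x3 x1 x2"
  unfolding gg_def by (simp add: algebra_simps)

locale dga =
  fixes hom :: "nat \<Rightarrow> 'a::real_vector set" and mul :: "'a \<Rightarrow> 'a \<Rightarrow> 'a" and d :: "'a \<Rightarrow> 'a"
  assumes cd: "cdga hom mul d"
begin

lemma sub: "subspace (hom k)" using cd unfolding cdga_def by blast
lemma bil: "bilinear mul" using cd unfolding cdga_def by blast
lemma lin: "linear d" using cd unfolding cdga_def by blast
lemma assoc: "mul (mul x y) z = mul x (mul y z)" using cd unfolding cdga_def by blast
lemma hmul0: "x \<in> hom p \<Longrightarrow> y \<in> hom q \<Longrightarrow> mul x y \<in> hom (p + q)" using cd unfolding cdga_def by blast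
lemma hmul: "x \<in> hom p \<Longrightarrow> y \<in> hom q \<Longrightarrow> r = p + q \<Longrightarrow> mul x y \<in> hom r" using hmul0 by blast
lemma comm: "x \<in> hom p \<Longrightarrow> y \<in> hom q \<Longrightarrow> mul x y = ((-1) ^ (p * q)) *\<^sub>R mul y x" using cd unfolding cdga_def by blast
lemma dhom0: "x \<in> hom k \<Longrightarrow> d x \<in> hom (Suc k)" using cd unfolding cdga_def by blast
lemma dhom: "x \<in> hom k \<Longrightarrow> r = Suc k \<Longrightarrow> d x \<in> hom r" using dhom0 by blast
lemma dd: "d (d x) = 0" using cd unfolding cdga_def by blast
lemma leib: "x \<in> hom p \<Longrightarrow> d (mul x y) = mul (d x) y + ((-1) ^ p) *\<^sub>R mul x (d y)" using cd unfolding cdga_def by blast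

lemmas mulrules = bilinear_ladd[OF bil] bilinear_radd[OF bil] bilinear_lmul[OF bil] bilinear_rmul[OF bil]
  bilinear_lneg[OF bil] bilinear_rneg[OF bil] bilinear_lzero[OF bil] bilinear_rzero[OF bil]
  bilinear_lsub[OF bil] bilinear_rsub[OF bil] assoc
lemmas drules = linear_add[OF lin] linear_diff[OF lin] linear_0[OF lin] linear_neg[OF lin] linear_scale[OF lin]

lemma c_ev: "x \<in> hom p \<Longrightarrow> y \<in> hom q \<Longrightarrow> even (p * q) \<Longrightarrow> mul x y = mul y x"
  using comm[of x p y q] by simp
lemma c_od: "x \<in> hom p \<Longrightarrow> y \<in> hom q \<Longrightarrow> odd p \<Longrightarrow> odd q \<Longrightarrow> mul x y = - mul y x"
  using comm[of x p y q] by simp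
lemma s_ev: "x \<in> hom p \<Longrightarrow> y \<in> hom q \<Longrightarrow> even (p * q) \<Longrightarrow> mul x (mul y z) = mul y (mul x z)"
  using assoc[of x y z, symmetric] assoc[of y x z] c_ev[of x p y q] by simp
lemma s_od: "x \<in> hom p \<Longrightarrow> y \<in> hom q \<Longrightarrow> odd p \<Longrightarrow> odd q \<Longrightarrow> mul x (mul y z) = - mul y (mul x z)"
  using assoc[of x y z, symmetric] assoc[of y x z] c_od[of x p y q] bilinear_lneg[OF bil] by simp
lemma sq0: "x \<in> hom p \<Longrightarrow> odd p \<Longrightarrow> mul x x = 0"
proof -
  assume a: "x \<in> hom p" "odd p"
  have "mul x x + mul x x = 0" using c_od[of x p x p] a by (simp add: eq_neg_iff_add_eq_0)
  hence "(2::real) *\<^sub>R mul x x = 0" by (simp add: scaleR_2)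
  thus ?thesis by simp
qed
lemma sq0': "x \<in> hom p \<Longrightarrow> odd p \<Longrightarrow> mul x (mul x z) = 0"
  using assoc[of x x z, symmetric] sq0[of x p] bilinear_lzero[OF bil] by simp

lemma d_closed_mul: "x \<in> hom p \<Longrightarrow> d x = 0 \<Longrightarrow> d (mul x y) = ((-1) ^ p) *\<^sub>R mul x (d y)"
  using leib[of x p y] by (simp add: mulrules)
lemma d_mul_closed: "x \<in> hom p \<Longrightarrow> d y = 0 \<Longrightarrow> d (mul x y) = mul (d x) y"
  using leib[of x p y] by (simp add: mulrules)

lemma exact_pos: "0 < k \<Longrightarrow> exact_form hom d k x \<longleftrightarrow> (\<exists>y\<in>hom (k - 1). x = d y)"
proof -
  assume k: "0 < k"
  have z: "0 = d 0" using linear_0[OF lin] by simp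
  have z0: "(0::'a) \<in> hom (k - 1)" using subspace_0[OF sub] by blast
  have hk: "\<And>y. y \<in> hom (k - 1) \<Longrightarrow> d y \<in> hom k" using dhom[of _ "k - 1" k] k by simp
  show ?thesis unfolding exact_form_def using k z z0 hk by blast
qed

lemma hclass_eq: "0 < k \<Longrightarrow> x - y = d w \<Longrightarrow> w \<in> hom (k - 1) \<Longrightarrow> hclass hom d k x = hclass hom d k y"
  unfolding hclass_def
proof (intro Collect_cong conj_cong refl)
  fix z assume k: "0 < k" and e: "x - y = d w" and w: "w \<in> hom (k - 1)"
  have "x - z = d w + (y - z)" using e by (simp add: algebra_simps)
  show "exact_form hom d k (x - z) = exact_form hom d k (y - z)"
    unfolding exact_pos[OF k]
  proof
    assume "\<exists>v\<in>hom (k - 1). x - z = d v"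
    then obtain v where v: "v \<in> hom (k-1)" "x - z = d v" by blast
    have "y - z = d (v - w)" using v e by (simp add: drules algebra_simps)
    thus "\<exists>v\<in>hom (k - 1). y - z = d v" using v w subspace_diff[OF sub] by blast
  next
    assume "\<exists>v\<in>hom (k - 1). y - z = d v"
    then obtain v where v: "v \<in> hom (k-1)" "y - z = d v" by blast
    have "x - z = d (v + w)" using v e by (simp add: drules algebra_simps)
    thus "\<exists>v\<in>hom (k - 1). x - z = d v" using v w subspace_add[OF sub] by blast
  qed
qed

lemma self_in_hclass: "closed_form hom d k x \<Longrightarrow> x \<in> hclass hom d k x"
  unfolding hclass_def exact_form_def closed_form_def by (simp add: subspace_0[OF sub])

lemma hclass_mem: "y \<in> hclass hom d k x \<Longrightarrow> 0 < k \<Longrightarrow> closed_form hom d k y \<and> (\<exists>w\<in>hom (k-1). x - y = d w)"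
  unfolding hclass_def using exact_pos by blast

lemma hminus_eq:
  assumes k: "0 < k" and x: "closed_form hom d k x" and y: "closed_form hom d k y"
  shows "hminus (hclass hom d k x) (hclass hom d k y) = hclass hom d k (x - y)"
proof
  show "hminus (hclass hom d k x) (hclass hom d k y) \<subseteq> hclass hom d k (x - y)"
  proof
    fix z assume "z \<in> hminus (hclass hom d k x) (hclass hom d k y)"
    then obtain x' y' where z: "z = x' - y'" and x': "x' \<in> hclass hom d k x" and y': "y' \<in> hclass hom d k y"
      unfolding hminus_def by blast
    obtain u where u: "u \<in> hom (k-1)" "x - x' = d u" and cx: "closed_form hom d k x'" using hclass_mem[OF x' k] by blast
    obtain v where v: "v \<in> hom (k-1)" "y - y' = d v" and cy: "closed_form hom d k y'" using hclass_mem[OF y' k] by blast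
    have cz: "closed_form hom d k z" using cx cy z unfolding closed_form_def
      by (simp add: subspace_diff[OF sub] drules)
    have "(x - y) - z = d (u - v)" using u v z by (simp add: drules algebra_simps)
    hence "hclass hom d k (x - y) = hclass hom d k z" using hclass_eq[OF k] u v subspace_diff[OF sub] by blast
    thus "z \<in> hclass hom d k (x - y)" using self_in_hclass[OF cz] by simp
  qed
next
  show "hclass hom d k (x - y) \<subseteq> hminus (hclass hom d k x) (hclass hom d k y)"
  proof
    fix z assume z: "z \<in> hclass hom d k (x - y)"
    obtain u where u: "u \<in> hom (k-1)" "(x - y) - z = d u" and cz: "closed_form hom d k z" using hclass_mem[OF z k] by blast
    have c2: "closed_form hom d k (z + y)" using cz y unfolding closed_form_def
      by (simp add: subspace_add[OF sub] drules)
    have "x - (z + y) = d u" using u by (simp add: algebra_simps)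
    hence "hclass hom d k x = hclass hom d k (z + y)" using hclass_eq[OF k] u by blast
    hence "z + y \<in> hclass hom d k x" using self_in_hclass[OF c2] by simp
    moreover have "y \<in> hclass hom d k y" using self_in_hclass[OF y] .
    ultimately show "z \<in> hminus (hclass hom d k x) (hclass hom d k y)"
      unfolding hminus_def by force
  qed
qed


lemma L_xi:
  assumes c: "c \<in> hom 3" and x2: "x2 \<in> hom 3" and x3: "x3 \<in> hom 3" and b2: "b2 \<in> hom 2" and b3: "b3 \<in> hom 2"
  shows "gg mul bF b2 b3 (xF + c) x2 x3 - gg mul bF b2 b3 xF x2 x3 = mul (mul b2 x3 - mul x2 b3) c"
proof -
  have f1: "mul c (mul x2 b3) = - mul x2 (mul b3 c)"
    using s_od[OF c x2, of b3] c_ev[OF c b3] by (simp add: mulrules)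
  have f2: "mul x3 (mul c b2) = mul b2 (mul x3 c)"
    using s_ev[OF x3 b2, of c] c_ev[OF c b2] by simp
  show ?thesis unfolding gg_def by (simp add: mulrules f1 f2 algebra_simps)
qed

lemma L_al:
  assumes s: "s \<in> hom 1" and b1: "b1 \<in> hom 2" and b2: "b2 \<in> hom 2" and b3: "b3 \<in> hom 2"
    and x1: "x1 \<in> hom 3" and x2: "x2 \<in> hom 3" and x3: "x3 \<in> hom 3"
  shows "gg mul b1 b2 b3 (x1 + mul s b1) (x2 + mul s b2) (x3 + mul s b3) = gg mul b1 b2 b3 x1 x2 x3"
proof -
  note R = s_ev[OF b1 x1] s_ev[OF b1 x2] s_ev[OF b1 x3]
    s_ev[OF b2 x1] s_ev[OF b2 x2] s_ev[OF b2 x3]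
    s_ev[OF b3 x1] s_ev[OF b3 x2] s_ev[OF b3 x3]
    s_ev[OF b1 s] s_ev[OF b2 s] s_ev[OF b3 s]
    s_od[OF x1 s] s_od[OF x2 s] s_od[OF x3 s]
    sq0'[OF s] c_ev[OF b2 b1] c_ev[OF b3 b1] c_ev[OF b3 b2]
  have "gg mul b1 b2 b3 (x1 + mul s b1) (x2 + mul s b2) (x3 + mul s b3) = gg mul b1 b2 b3 x1 x2 x3" unfolding gg_def apply (simp only: mulrules) apply (simp add: R)
    done
  thus ?thesis .
qed


lemma L_be:
  assumes al: "al \<in> hom 2" and b2: "b2 \<in> hom 2" and b3: "b3 \<in> hom 2"
    and x2: "x2 \<in> hom 3" and x3: "x3 \<in> hom 3" and t: "t \<in> hom 1"
    and e2: "mul al b2 = d x2" and e3: "mul al b3 = d x3"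
  shows "gg mul (bF + d t) b2 b3 (xF + mul al t) x2 x3 - gg mul bF b2 b3 xF x2 x3 = d (mul (mul x2 x3) t)"
proof -
  have x23: "mul x2 x3 \<in> hom 6" using hmul[OF x2 x3] by simp
  have D: "d (mul (mul x2 x3) t) = mul (mul (mul al b2) x3) t - mul (mul x2 (mul al b3)) t + mul (mul x2 x3) (d t)"
    using leib[OF x23, of t] leib[OF x2, of x3] e2 e3 by (simp add: mulrules)
  have P1: "mul al (mul t (mul x2 b3)) = - mul x2 (mul al (mul b3 t))"
    using c_ev[OF x2 b3] s_ev[OF t b3] s_ev[OF x2 al] s_ev[OF x2 b3] c_od[OF x2 t] by (simp add: mulrules)
  have P2: "mul x3 (mul al (mul t b2)) = mul al (mul b2 (mul x3 t))"
    using s_ev[OF x3 al] c_ev[OF t b2] s_ev[OF x3 b2] by simp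
  show ?thesis unfolding gg_def D apply (simp only: mulrules) apply (simp add: P1 P2)
    done
qed

lemma gg_closed:
  assumes al: "al \<in> hom 2" "d al = 0" and b1: "b1 \<in> hom 2" "d b1 = 0" and b2: "b2 \<in> hom 2" "d b2 = 0"
    and b3: "b3 \<in> hom 2" "d b3 = 0"
    and x1: "x1 \<in> hom 3" and x2: "x2 \<in> hom 3" and x3: "x3 \<in> hom 3"
    and e1: "mul al b1 = d x1" and e2: "mul al b2 = d x2" and e3: "mul al b3 = d x3"
  shows "closed_form hom d 8 (gg mul b1 b2 b3 x1 x2 x3)"
proof -
  have h12: "mul x1 x2 \<in> hom 6" using hmul[OF x1 x2] by simp
  have h23: "mul x2 x3 \<in> hom 6" using hmul[OF x2 x3] by simp
  have h31: "mul x3 x1 \<in> hom 6" using hmul[OF x3 x1] by simp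
  have H: "gg mul b1 b2 b3 x1 x2 x3 \<in> hom 8" unfolding gg_def
    by (intro subspace_add[OF sub] hmul[OF h12 b3(1)] hmul[OF h23 b1(1)] hmul[OF h31 b2(1)]) simp_all
  have D1: "d (mul (mul x1 x2) b3) = mul (mul (mul al b1) x2 - mul x1 (mul al b2)) b3"
    using d_mul_closed[OF h12 b3(2)] leib[OF x1, of x2] e1 e2 by simp
  have D2: "d (mul (mul x2 x3) b1) = mul (mul (mul al b2) x3 - mul x2 (mul al b3)) b1"
    using d_mul_closed[OF h23 b1(2)] leib[OF x2, of x3] e2 e3 by simp
  have D3: "d (mul (mul x3 x1) b2) = mul (mul (mul al b3) x1 - mul x3 (mul al b1)) b2"
    using d_mul_closed[OF h31 b2(2)] leib[OF x3, of x1] e3 e1 by simp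
  note R = s_ev[OF b2(1) b1(1)] s_ev[OF b3(1) b1(1)] s_ev[OF b3(1) b2(1)]
    c_ev[OF b2(1) b1(1)] c_ev[OF b3(1) b1(1)] c_ev[OF b3(1) b2(1)]
    s_ev[OF x1 al(1)] s_ev[OF x2 al(1)] s_ev[OF x3 al(1)]
    s_ev[OF b1(1) al(1)] s_ev[OF b2(1) al(1)] s_ev[OF b3(1) al(1)]
    c_ev[OF b1(1) al(1)] c_ev[OF b2(1) al(1)] c_ev[OF b3(1) al(1)]
    s_ev[OF x1 b1(1)] s_ev[OF x1 b2(1)] s_ev[OF x1 b3(1)]
    s_ev[OF x2 b1(1)] s_ev[OF x2 b2(1)] s_ev[OF x2 b3(1)]
    s_ev[OF x3 b1(1)] s_ev[OF x3 b2(1)] s_ev[OF x3 b3(1)]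
    c_ev[OF x1 b1(1)] c_ev[OF x1 b2(1)] c_ev[OF x1 b3(1)]
    c_ev[OF x2 b1(1)] c_ev[OF x2 b2(1)] c_ev[OF x2 b3(1)]
    c_ev[OF x3 b1(1)] c_ev[OF x3 b2(1)] c_ev[OF x3 b3(1)]
  have "d (gg mul b1 b2 b3 x1 x2 x3) = 0" unfolding gg_def drules D1 D2 D3
    apply (simp only: mulrules) apply (simp add: R)
    done
  thus ?thesis using H unfolding closed_form_def by simp
qed


lemma cls:
  assumes a: "a \<in> hcoh hom d k" and k: "0 < k"
  shows "\<exists>x. x \<in> a" "\<forall>y\<in>a. closed_form hom d k y"
    "\<forall>y\<in>a. \<forall>y'\<in>a. \<exists>w\<in>hom (k - 1). y - y' = d w"
proof -
  obtain x0 where x0: "closed_form hom d k x0" "a = hclass hom d k x0"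
    using a unfolding hcoh_def by blast
  show "\<exists>x. x \<in> a" using self_in_hclass[OF x0(1)] x0(2) by blast
  show "\<forall>y\<in>a. closed_form hom d k y" using hclass_mem[OF _ k] x0(2) by blast
  show "\<forall>y\<in>a. \<forall>y'\<in>a. \<exists>w\<in>hom (k - 1). y - y' = d w"
  proof (intro ballI)
    fix y y' assume y: "y \<in> a" and y': "y' \<in> a"
    obtain w where w: "w \<in> hom (k-1)" "x0 - y = d w" using hclass_mem[OF _ k] y x0(2) by blast
    obtain w' where w': "w' \<in> hom (k-1)" "x0 - y' = d w'" using hclass_mem[OF _ k] y' x0(2) by blast
    have "y - y' = d (w' - w)" using w w' by (simp add: drules algebra_simps)
    thus "\<exists>w\<in>hom (k - 1). y - y' = d w" using w w' subspace_diff[OF sub] by blast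
  qed
qed

lemma prodex:
  assumes a: "a \<in> hcoh hom d 2" and x: "x \<in> hcoh hom d 2"
    and h: "hcup hom mul d 2 2 a x = hclass hom d 4 0"
  shows "\<forall>al\<in>a. \<forall>b\<in>x. \<exists>xi\<in>hom 3. mul al b = d xi"
proof (intro ballI)
  fix al b assume al: "al \<in> a" and b: "b \<in> x"
  have two: "0 < (2::nat)" by simp
  note Ca = cls[OF a two, simplified] and Cx = cls[OF x two, simplified]
  define a0 where "a0 = (SOME y. y \<in> a)"
  define b0 where "b0 = (SOME y. y \<in> x)"
  have a0: "a0 \<in> a" unfolding a0_def using someI_ex[OF Ca(1)] .
  have b0: "b0 \<in> x" unfolding b0_def using someI_ex[OF Cx(1)] .
  have ca0: "a0 \<in> hom 2" "d a0 = 0" using Ca(2) a0 unfolding closed_form_def by auto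
  have cb0: "b0 \<in> hom 2" "d b0 = 0" using Cx(2) b0 unfolding closed_form_def by auto
  have cb: "b \<in> hom 2" "d b = 0" using Cx(2) b unfolding closed_form_def by auto
  have p0: "closed_form hom d 4 (mul a0 b0)" unfolding closed_form_def
    using hmul[OF ca0(1) cb0(1), of 4] leib[OF ca0(1), of b0] ca0 cb0 by (simp add: mulrules)
  have "mul a0 b0 \<in> hcup hom mul d 2 2 a x"
    unfolding hcup_def a0_def[symmetric] b0_def[symmetric] using self_in_hclass[OF p0] by simp
  hence "mul a0 b0 \<in> hclass hom d 4 0" using h by simp
  then obtain w where w: "w \<in> hom 3" "0 - mul a0 b0 = d w" using hclass_mem[of "mul a0 b0" 4 0] by auto
  obtain s where s: "s \<in> hom (Suc 0)" "al - a0 = d s" using Ca(3) al a0 by blast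
  obtain t where t: "t \<in> hom (Suc 0)" "b - b0 = d t" using Cx(3) b b0 by blast
  have s1: "s \<in> hom 1" "t \<in> hom 1" using s t by simp_all
  have w': "mul a0 b0 = - d w" using w(2) by (metis diff_0 minus_minus)
  have "mul al b = mul a0 b0 + mul (al - a0) b + mul a0 (b - b0)" by (simp add: mulrules)
  also have "\<dots> = - d w + mul (d s) b + mul a0 (d t)" by (simp only: w' s(2) t(2))
  also have "\<dots> = d (- w + mul s b + mul a0 t)"
    using d_mul_closed[OF s1(1) cb(2)] d_closed_mul[OF ca0, of t] by (simp add: linear_add[OF lin] linear_neg[OF lin] linear_diff[OF lin])
  finally have e: "mul al b = d (- w + mul s b + mul a0 t)" .
  have "- w + mul s b + mul a0 t \<in> hom 3"
    using hmul[OF s1(1) cb(1), of 3] hmul[OF ca0(1) s1(2), of 3]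
    by (intro subspace_add[OF sub] subspace_neg[OF sub] w(1)) simp_all
  thus "\<exists>xi\<in>hom 3. mul al b = d xi" using e by blast
qed

lemma mrep_in:
  assumes b1: "b1 \<in> x" and al: "al \<in> a" and b3: "b3 \<in> y"
    and cb1: "closed_form hom d 2 b1" and cal: "closed_form hom d 2 al" and cb3: "closed_form hom d 2 b3"
    and xi: "xi \<in> hom 3" and eta: "eta \<in> hom 3"
    and e1: "mul b1 al = d xi" and e2: "mul al b3 = d eta"
  shows "\<exists>s\<in>massey hom mul d 2 2 2 x a y. mul b1 eta - mul xi b3 \<in> s"
proof -
  have hb1: "b1 \<in> hom 2" "d b1 = 0" using cb1 unfolding closed_form_def by auto
  have hb3: "b3 \<in> hom 2" "d b3 = 0" using cb3 unfolding closed_form_def by auto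
  have c: "closed_form hom d 5 (mul b1 eta - mul xi b3)" unfolding closed_form_def
  proof
    show "mul b1 eta - mul xi b3 \<in> hom 5"
      using subspace_diff[OF sub] hmul[OF hb1(1) eta, of 5] hmul[OF xi hb3(1), of 5] by simp
    show "d (mul b1 eta - mul xi b3) = 0"
      using d_closed_mul[OF hb1, of eta] d_mul_closed[OF xi hb3(2)] e1[symmetric] e2[symmetric] by (simp add: drules assoc)
  qed
  have eq: "mul b1 eta + ((-1::real) ^ (2 + 1)) *\<^sub>R mul xi b3 = mul b1 eta - mul xi b3" by simp
  have xi': "xi \<in> hom (2 + 2 - 1)" "eta \<in> hom (2 + 2 - 1)" using xi eta by simp_all
  have "hclass hom d (2 + 2 + 2 - 1) (mul b1 eta + ((-1::real) ^ (2 + 1)) *\<^sub>R mul xi b3) \<in> massey hom mul d 2 2 2 x a y"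
    unfolding massey_def mem_Collect_eq
    apply (rule exI[of _ b1], rule exI[of _ al], rule exI[of _ b3], rule exI[of _ xi], rule exI[of _ eta])
    using b1 al b3 xi' e1 e2 by (intro conjI refl)
  hence "hclass hom d 5 (mul b1 eta - mul xi b3) \<in> massey hom mul d 2 2 2 x a y" using eq by simp
  thus ?thesis using self_in_hclass[OF c] by blast
qed


lemma main:
  assumes a: "a \<in> hcoh hom d 2"
    and x1: "x1 \<in> hcoh hom d 2" and x2: "x2 \<in> hcoh hom d 2" and x3: "x3 \<in> hcoh hom d 2"
    and ax1: "hcup hom mul d 2 2 a x1 = hclass hom d 4 0"
    and ax2: "hcup hom mul d 2 2 a x2 = hclass hom d 4 0"
    and ax3: "hcup hom mul d 2 2 a x3 = hclass hom d 4 0"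
  shows "massey hom mul d 2 2 2 x1 a x2 \<noteq> {} \<and>
         massey hom mul d 2 2 2 x1 a x3 \<noteq> {} \<and>
         massey hom mul d 2 2 2 x2 a x3 \<noteq> {} \<and>
         (\<forall>b1 \<in> gmassey hom mul d a x1 x2 x3. \<forall>b2 \<in> gmassey hom mul d a x1 x2 x3.
            hminus b1 b2 \<in> cup_span hom mul d 5 3
              (massey hom mul d 2 2 2 x1 a x2 \<union> massey hom mul d 2 2 2 x1 a x3 \<union>
               massey hom mul d 2 2 2 x2 a x3))"
proof -
  have two: "0 < (2::nat)" by simp
  note Ca = cls[OF a two, simplified] and C1 = cls[OF x1 two, simplified]
    and C2 = cls[OF x2 two, simplified] and C3 = cls[OF x3 two, simplified]
  note P1 = prodex[OF a x1 ax1] and P2 = prodex[OF a x2 ax2] and P3 = prodex[OF a x3 ax3]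
  have ne: "massey hom mul d 2 2 2 x a y \<noteq> {}"
    if x: "x \<in> hcoh hom d 2" and y: "y \<in> hcoh hom d 2"
      and Px: "\<forall>al\<in>a. \<forall>b\<in>x. \<exists>xi\<in>hom 3. mul al b = d xi"
      and Py: "\<forall>al\<in>a. \<forall>b\<in>y. \<exists>xi\<in>hom 3. mul al b = d xi" for x y
  proof -
    note Cx = cls[OF x two, simplified] and Cy = cls[OF y two, simplified]
    obtain al where al: "al \<in> a" using Ca(1) by blast
    obtain b1 where b1: "b1 \<in> x" using Cx(1) by blast
    obtain b3 where b3: "b3 \<in> y" using Cy(1) by blast
    have cal: "closed_form hom d 2 al" using Ca(2) al by blast
    have cb1: "closed_form hom d 2 b1" using Cx(2) b1 by blast
    have cb3: "closed_form hom d 2 b3" using Cy(2) b3 by blast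
    obtain xi where xi: "xi \<in> hom 3" "mul al b1 = d xi" using Px al b1 by blast
    obtain eta where eta: "eta \<in> hom 3" "mul al b3 = d eta" using Py al b3 by blast
    have "mul b1 al = d xi" using c_ev[of b1 2 al 2] cal cb1 xi(2) unfolding closed_form_def by simp
    then obtain s where "s \<in> massey hom mul d 2 2 2 x a y"
      using mrep_in[OF b1 al b3 cb1 cal cb3 xi(1) eta(1) _ eta(2)] by blast
    thus ?thesis by blast
  qed
  have part2: "hminus B1 B2 \<in> cup_span hom mul d 5 3
              (massey hom mul d 2 2 2 x1 a x2 \<union> massey hom mul d 2 2 2 x1 a x3 \<union>
               massey hom mul d 2 2 2 x2 a x3)"
    if B1: "B1 \<in> gmassey hom mul d a x1 x2 x3" and B2: "B2 \<in> gmassey hom mul d a x1 x2 x3" for B1 B2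
  proof -
    obtain ap e1 e2 e3 v1 v2 v3 where D1: "B1 = hclass hom d 8 (gg mul e1 e2 e3 v1 v2 v3)"
      "ap \<in> a" "e1 \<in> x1" "e2 \<in> x2" "e3 \<in> x3" "v1 \<in> hom 3" "v2 \<in> hom 3" "v3 \<in> hom 3"
      "mul ap e1 = d v1" "mul ap e2 = d v2" "mul ap e3 = d v3"
      using B1 unfolding gmassey_def gg_def by blast
    obtain al b1 b2 b3 u1 u2 u3 where D2: "B2 = hclass hom d 8 (gg mul b1 b2 b3 u1 u2 u3)"
      "al \<in> a" "b1 \<in> x1" "b2 \<in> x2" "b3 \<in> x3" "u1 \<in> hom 3" "u2 \<in> hom 3" "u3 \<in> hom 3"
      "mul al b1 = d u1" "mul al b2 = d u2" "mul al b3 = d u3"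
      using B2 unfolding gmassey_def gg_def by blast
    have cf: "y \<in> hom 2 \<and> d y = 0" if "X \<in> hcoh hom d 2" "y \<in> X" for X y
      using cls(2)[OF that(1) two] that(2) unfolding closed_form_def by blast
    have hap: "ap \<in> hom 2" "d ap = 0" using cf[OF a D1(2)] by auto
    have he1: "e1 \<in> hom 2" "d e1 = 0" using cf[OF x1 D1(3)] by auto
    have he2: "e2 \<in> hom 2" "d e2 = 0" using cf[OF x2 D1(4)] by auto
    have he3: "e3 \<in> hom 2" "d e3 = 0" using cf[OF x3 D1(5)] by auto
    have hal: "al \<in> hom 2" "d al = 0" using cf[OF a D2(2)] by auto
    have hb1: "b1 \<in> hom 2" "d b1 = 0" using cf[OF x1 D2(3)] by auto
    have hb2: "b2 \<in> hom 2" "d b2 = 0" using cf[OF x2 D2(4)] by auto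
    have hb3: "b3 \<in> hom 2" "d b3 = 0" using cf[OF x3 D2(5)] by auto
    obtain sg where sg: "sg \<in> hom (Suc 0)" "ap - al = d sg" using Ca(3) D1(2) D2(2) by blast
    obtain t1 where t1: "t1 \<in> hom (Suc 0)" "e1 - b1 = d t1" using C1(3) D1(3) D2(3) by blast
    obtain t2 where t2: "t2 \<in> hom (Suc 0)" "e2 - b2 = d t2" using C2(3) D1(4) D2(4) by blast
    obtain t3 where t3: "t3 \<in> hom (Suc 0)" "e3 - b3 = d t3" using C3(3) D1(5) D2(5) by blast
    have hsg: "sg \<in> hom 1" "t1 \<in> hom 1" "t2 \<in> hom 1" "t3 \<in> hom 1" using sg t1 t2 t3 by simp_all
    define y1 where "y1 = u1 + mul sg b1"
    define y2 where "y2 = u2 + mul sg b2"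
    define y3 where "y3 = u3 + mul sg b3"
    define z1 where "z1 = y1 + mul ap t1"
    define z2 where "z2 = y2 + mul ap t2"
    define z3 where "z3 = y3 + mul ap t3"
    define c1 where "c1 = v1 - z1"
    define c2 where "c2 = v2 - z2"
    define c3 where "c3 = v3 - z3"
    have hy: "y1 \<in> hom 3" "y2 \<in> hom 3" "y3 \<in> hom 3" unfolding y1_def y2_def y3_def
      using D2(6-8) hmul[OF hsg(1) hb1(1), of 3] hmul[OF hsg(1) hb2(1), of 3] hmul[OF hsg(1) hb3(1), of 3]
      by (auto intro!: subspace_add[OF sub])
    have hz: "z1 \<in> hom 3" "z2 \<in> hom 3" "z3 \<in> hom 3" unfolding z1_def z2_def z3_def
      using hy hmul[OF hap(1) hsg(2), of 3] hmul[OF hap(1) hsg(3), of 3] hmul[OF hap(1) hsg(4), of 3]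
      by (auto intro!: subspace_add[OF sub])
    have hc: "c1 \<in> hom 3" "c2 \<in> hom 3" "c3 \<in> hom 3" unfolding c1_def c2_def c3_def
      using hz D1(6-8) by (auto intro!: subspace_diff[OF sub])
    have dsg: "d sg = ap - al" using sg(2) by simp
    have dt: "d t1 = e1 - b1" "d t2 = e2 - b2" "d t3 = e3 - b3" using t1(2) t2(2) t3(2) by simp_all
    have dy: "mul ap b1 = d y1" "mul ap b2 = d y2" "mul ap b3 = d y3" unfolding y1_def y2_def y3_def
      using d_mul_closed[OF hsg(1) hb1(2)] d_mul_closed[OF hsg(1) hb2(2)] d_mul_closed[OF hsg(1) hb3(2)]
        D2(9-11) dsg by (simp_all add: linear_add[OF lin] bilinear_lsub[OF bil])
    have dz: "mul ap e1 = d z1" "mul ap e2 = d z2" "mul ap e3 = d z3" unfolding z1_def z2_def z3_def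
      using d_closed_mul[OF hap, of t1] d_closed_mul[OF hap, of t2] d_closed_mul[OF hap, of t3]
        dy[symmetric] dt by (simp_all add: linear_add[OF lin] bilinear_rsub[OF bil])
    have dc: "d c1 = 0" "d c2 = 0" "d c3 = 0" unfolding c1_def c2_def c3_def
      using dz D1(9-11) by (simp_all add: linear_diff[OF lin])
    have E: "b1 + d t1 = e1" "b2 + d t2 = e2" "b3 + d t3 = e3" using dt by simp_all
    have Z: "y1 + mul ap t1 = z1" "y2 + mul ap t2 = z2" "y3 + mul ap t3 = z3" using z1_def z2_def z3_def by simp_all
    have V: "z1 + c1 = v1" "z2 + c2 = v2" "z3 + c3 = v3" using c1_def c2_def c3_def by simp_all
    have g1: "gg mul b1 b2 b3 y1 y2 y3 = gg mul b1 b2 b3 u1 u2 u3" unfolding y1_def y2_def y3_def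
      by (rule L_al[OF hsg(1) hb1(1) hb2(1) hb3(1) D2(6-8)])
    have g2: "gg mul e1 b2 b3 z1 y2 y3 - gg mul b1 b2 b3 y1 y2 y3 = d (mul (mul y2 y3) t1)"
      using L_be[where bF=b1 and xF=y1, OF hap(1) hb2(1) hb3(1) hy(2) hy(3) hsg(2) dy(2) dy(3)]
      by (simp only: E Z)
    have g3': "gg mul e2 b3 e1 z2 y3 z1 - gg mul b2 b3 e1 y2 y3 z1 = d (mul (mul y3 z1) t2)"
      using L_be[where bF=b2 and xF=y2, OF hap(1) hb3(1) he1(1) hy(3) hz(1) hsg(3) dy(3) dz(1)]
      by (simp only: E Z)
    have g3: "gg mul e1 e2 b3 z1 z2 y3 - gg mul e1 b2 b3 z1 y2 y3 = d (mul (mul y3 z1) t2)"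
      unfolding gg_rot[of mul e1 e2 b3 z1 z2 y3] gg_rot[of mul e1 b2 b3 z1 y2 y3] by (rule g3')
    have g4': "gg mul e3 e1 e2 z3 z1 z2 - gg mul b3 e1 e2 y3 z1 z2 = d (mul (mul z1 z2) t3)"
      using L_be[where bF=b3 and xF=y3, OF hap(1) he1(1) he2(1) hz(1) hz(2) hsg(4) dz(1) dz(2)]
      by (simp only: E Z)
    have g4: "gg mul e1 e2 e3 z1 z2 z3 - gg mul e1 e2 b3 z1 z2 y3 = d (mul (mul z1 z2) t3)"
      unfolding gg_rot2[of mul e1 e2 e3 z1 z2 z3] gg_rot2[of mul e1 e2 b3 z1 z2 y3] by (rule g4')
    have ha: "gg mul e1 e2 e3 v1 z2 z3 - gg mul e1 e2 e3 z1 z2 z3 = mul (mul e2 z3 - mul z2 e3) c1"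
      using L_xi[where bF=e1 and xF=z1, OF hc(1) hz(2) hz(3) he2(1) he3(1)] by (simp only: V)
    have hb': "gg mul e2 e3 e1 v2 z3 v1 - gg mul e2 e3 e1 z2 z3 v1 = mul (mul e3 v1 - mul z3 e1) c2"
      using L_xi[where bF=e2 and xF=z2, OF hc(2) hz(3) D1(6) he3(1) he1(1)] by (simp only: V)
    have hb: "gg mul e1 e2 e3 v1 v2 z3 - gg mul e1 e2 e3 v1 z2 z3 = mul (mul e1 z3 - mul v1 e3) (- c2)"
    proof -
      have "mul (mul e3 v1 - mul z3 e1) c2 = mul (mul e1 z3 - mul v1 e3) (- c2)"
        using c_ev[OF he3(1) D1(6)] c_ev[OF hz(3) he1(1)] by (simp add: mulrules)
      thus ?thesis using hb' unfolding gg_rot[of mul e1 e2 e3 v1 v2 z3] gg_rot[of mul e1 e2 e3 v1 z2 z3] by simp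
    qed
    have hc': "gg mul e3 e1 e2 v3 v1 v2 - gg mul e3 e1 e2 z3 v1 v2 = mul (mul e1 v2 - mul v1 e2) c3"
      using L_xi[where bF=e3 and xF=z3, OF hc(3) D1(6) D1(7) he1(1) he2(1)] by (simp only: V)
    have hcc: "gg mul e1 e2 e3 v1 v2 v3 - gg mul e1 e2 e3 v1 v2 z3 = mul (mul e1 v2 - mul v1 e2) c3"
      unfolding gg_rot2[of mul e1 e2 e3 v1 v2 v3] gg_rot2[of mul e1 e2 e3 v1 v2 z3] by (rule hc')
    define W where "W = mul (mul y2 y3) t1 + mul (mul y3 z1) t2 + mul (mul z1 z2) t3"
    define m1 where "m1 = mul e1 v2 - mul v1 e2"
    define m2 where "m2 = mul e1 z3 - mul v1 e3"
    define m3 where "m3 = mul e2 z3 - mul z2 e3"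
    define S where "S = mul m3 c1 + mul m2 (- c2) + mul m1 c3"
    have "gg mul e1 e2 e3 v1 v2 v3 - gg mul b1 b2 b3 u1 u2 u3 =
        (gg mul e1 e2 e3 v1 v2 v3 - gg mul e1 e2 e3 v1 v2 z3) + (gg mul e1 e2 e3 v1 v2 z3 - gg mul e1 e2 e3 v1 z2 z3)
        + (gg mul e1 e2 e3 v1 z2 z3 - gg mul e1 e2 e3 z1 z2 z3) + (gg mul e1 e2 e3 z1 z2 z3 - gg mul e1 e2 b3 z1 z2 y3)
        + (gg mul e1 e2 b3 z1 z2 y3 - gg mul e1 b2 b3 z1 y2 y3) + (gg mul e1 b2 b3 z1 y2 y3 - gg mul b1 b2 b3 y1 y2 y3)
        + (gg mul b1 b2 b3 y1 y2 y3 - gg mul b1 b2 b3 u1 u2 u3)" by (simp add: algebra_simps)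
    also have "\<dots> = S + d W" unfolding hcc hb ha g4 g3 g2 S_def W_def m1_def m2_def m3_def
      by (simp add: g1 linear_add[OF lin] algebra_simps)
    finally have diff: "gg mul e1 e2 e3 v1 v2 v3 - gg mul b1 b2 b3 u1 u2 u3 - S = d W" by simp
    have hW: "W \<in> hom (8 - 1)" unfolding W_def
      using hmul[OF hmul[OF hy(2) hy(3), of 6] hsg(2), of 7] hmul[OF hmul[OF hy(3) hz(1), of 6] hsg(3), of 7]
        hmul[OF hmul[OF hz(1) hz(2), of 6] hsg(4), of 7]
      by (auto intro!: subspace_add[OF sub])
    have cl1: "closed_form hom d 8 (gg mul e1 e2 e3 v1 v2 v3)"
      by (rule gg_closed[OF hap he1 he2 he3 D1(6-11)])
    have cl2: "closed_form hom d 8 (gg mul b1 b2 b3 u1 u2 u3)"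
      by (rule gg_closed[OF hal hb1 hb2 hb3 D2(6-11)])
    have eq: "hminus B1 B2 = hclass hom d 8 S"
      unfolding D1(1) D2(1) using hminus_eq[OF _ cl1 cl2] hclass_eq[OF _ diff hW] by simp
    have cc: "closed_form hom d 3 c1" "closed_form hom d 3 (- c2)" "closed_form hom d 3 c3"
      using hc dc subspace_neg[OF sub] unfolding closed_form_def by (auto simp: linear_neg[OF lin])
    have e1a: "mul e1 ap = d v1" using c_ev[OF he1(1) hap(1)] D1(9) by simp
    have e2a: "mul e2 ap = d z2" using c_ev[OF he2(1) hap(1)] dz(2) by simp
    have cap: "closed_form hom d 2 ap" and ce1: "closed_form hom d 2 e1" and ce2: "closed_form hom d 2 e2"
      and ce3: "closed_form hom d 2 e3" using hap he1 he2 he3 unfolding closed_form_def by auto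
    have M1: "\<exists>s\<in>massey hom mul d 2 2 2 x1 a x2. m1 \<in> s" unfolding m1_def
      by (rule mrep_in[OF D1(3) D1(2) D1(4) ce1 cap ce2 D1(6) D1(7) e1a D1(10)])
    have M2: "\<exists>s\<in>massey hom mul d 2 2 2 x1 a x3. m2 \<in> s" unfolding m2_def
      by (rule mrep_in[OF D1(3) D1(2) D1(5) ce1 cap ce3 D1(6) hz(3) e1a dz(3)])
    have M3: "\<exists>s\<in>massey hom mul d 2 2 2 x2 a x3. m3 \<in> s" unfolding m3_def
      by (rule mrep_in[OF D1(4) D1(2) D1(5) ce2 cap ce3 hz(2) hz(3) e2a dz(3)])
    define SS where "SS = massey hom mul d 2 2 2 x1 a x2 \<union> massey hom mul d 2 2 2 x1 a x3 \<union>
               massey hom mul d 2 2 2 x2 a x3"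
    define mm where "mm = (\<lambda>j::nat. if j = 0 then m3 else if j = 1 then m2 else m1)"
    define hh where "hh = (\<lambda>j::nat. if j = 0 then c1 else if j = 1 then - c2 else c3)"
    have mem: "\<forall>j<(3::nat). (\<exists>s\<in>SS. mm j \<in> s) \<and> closed_form hom d 3 (hh j)"
    proof (intro allI impI)
      fix j :: nat assume "j < 3"
      hence "j = 0 \<or> j = 1 \<or> j = 2" by auto
      thus "(\<exists>s\<in>SS. mm j \<in> s) \<and> closed_form hom d 3 (hh j)"
        unfolding SS_def mm_def hh_def using M1 M2 M3 cc by auto
    qed
    have sumeq: "(\<Sum>j<(3::nat). mul (mm j) (hh j)) = S"
      unfolding S_def mm_def hh_def by (simp add: numeral_3_eq_3 algebra_simps)
    have "hclass hom d (5 + 3) (\<Sum>j<(3::nat). mul (mm j) (hh j)) \<in> cup_span hom mul d 5 3 SS"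
      unfolding cup_span_def mem_Collect_eq
      apply (rule exI[of _ 3], rule exI[of _ mm], rule exI[of _ hh])
      using mem by (intro conjI refl)
    thus ?thesis unfolding eq SS_def[symmetric] sumeq by simp
  qed
  show ?thesis using ne[OF x1 x2 P1 P2] ne[OF x1 x3 P1 P3] ne[OF x2 x3 P2 P3] part2 by blast
qed

end
theorem lemma2p3:
  fixes hom :: "nat \<Rightarrow> 'a::real_vector set"
    and mul :: "'a \<Rightarrow> 'a \<Rightarrow> 'a"
    and d :: "'a \<Rightarrow> 'a"
    and a x1 x2 x3 :: "'a set"
  assumes alg: "cdga hom mul d"
    and a: "a \<in> hcoh hom d 2"
    and x1: "x1 \<in> hcoh hom d 2" and x2: "x2 \<in> hcoh hom d 2" and x3: "x3 \<in> hcoh hom d 2"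
    and ax1: "hcup hom mul d 2 2 a x1 = hclass hom d 4 0"
    and ax2: "hcup hom mul d 2 2 a x2 = hclass hom d 4 0"
    and ax3: "hcup hom mul d 2 2 a x3 = hclass hom d 4 0"
  shows "massey hom mul d 2 2 2 x1 a x2 \<noteq> {} \<and>
         massey hom mul d 2 2 2 x1 a x3 \<noteq> {} \<and>
         massey hom mul d 2 2 2 x2 a x3 \<noteq> {} \<and>
         (\<forall>b1 \<in> gmassey hom mul d a x1 x2 x3. \<forall>b2 \<in> gmassey hom mul d a x1 x2 x3.
            hminus b1 b2 \<in> cup_span hom mul d 5 3
              (massey hom mul d 2 2 2 x1 a x2 \<union> massey hom mul d 2 2 2 x1 a x3 \<union>
               massey hom mul d 2 2 2 x2 a x3))"
proof -
  interpret dga hom mul d by (rule dga.intro[OF alg])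
  show ?thesis by (rule main[OF a x1 x2 x3 ax1 ax2 ax3])
qed

end
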